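(* There exists a binary $[40,8]$ linear code $N$ that is doubly even, contains the all-ones vector, and whose dual has minimum weight at least $4$, such that no Type~II $\mathbb{Z}_4$-code $C$ of length $40$ with $C^{(1)}=N$ is extremal.
   Context: A $\mathbb{Z}_4$-code of length $n$ is a $\mathbb{Z}_4$-submodule of $\mathbb{Z}_4^n$; it is self-dual if it equals its dual with respect to $x\cdot y=\sum x_iy_i \pmod 4$. The Euclidean weight of $x$ is $n_1(x)+4n_2(x)+n_3(x)$, $n_\alpha(x)$ being the number of coordinates equal to $\alpha$. A Type~II $\mathbb{Z}_4$-code is a self-dual code all of whose codewords have Euclidean weight divisible by $8$; it is extremal if its minimum Euclidean weight equals $8\lfloor n/24\rfloor+8$ (so $16$ for $n=40$). The residue code is $C^{(1)}=\{c\bmod 2: c\in C\}$. A binary code is doubly even if all codeword weights are divisible by $4$. *)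

theory Defs
  imports "HOL-Analysis.Finite_Cartesian_Product" "HOL-Library.Z2" "HOL-Library.Numeral_Type"
begin

definition hweight :: "'a::zero ^ 'n \<Rightarrow> nat" where
  "hweight x = card {i. x $ i \<noteq> 0}"

definition bin_linear_code :: "(bit ^ 'n) set \<Rightarrow> bool" where
  "bin_linear_code N \<longleftrightarrow> 0 \<in> N \<and> (\<forall>x\<in>N. \<forall>y\<in>N. x + y \<in> N)
     \<and> (\<forall>a::bit. \<forall>x\<in>N. (\<chi> i. a * x $ i) \<in> N)"

definition bin_code_nk :: "(bit ^ 'n) set \<Rightarrow> nat \<Rightarrow> bool" where
  "bin_code_nk N k \<longleftrightarrow> bin_linear_code N \<and> card N = 2 ^ k"

definition bin_dual :: "(bit ^ 'n) set \<Rightarrow> (bit ^ 'n) set" where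
  "bin_dual N = {y. \<forall>x\<in>N. (\<Sum>i\<in>UNIV. x $ i * y $ i) = 0}"

definition doubly_even :: "(bit ^ 'n) set \<Rightarrow> bool" where
  "doubly_even N \<longleftrightarrow> (\<forall>x\<in>N. 4 dvd hweight x)"

definition min_weight_ge :: "(bit ^ 'n) set \<Rightarrow> nat \<Rightarrow> bool" where
  "min_weight_ge N d \<longleftrightarrow> (\<forall>x\<in>N. x \<noteq> 0 \<longrightarrow> d \<le> hweight x)"

definition z4_code :: "(4 ^ 'n) set \<Rightarrow> bool" where
  "z4_code C \<longleftrightarrow> 0 \<in> C \<and> (\<forall>x\<in>C. \<forall>y\<in>C. x + y \<in> C)
     \<and> (\<forall>a::4. \<forall>x\<in>C. (\<chi> i. a * x $ i) \<in> C)"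

definition z4_dual :: "(4 ^ 'n) set \<Rightarrow> (4 ^ 'n) set" where
  "z4_dual C = {y. \<forall>x\<in>C. (\<Sum>i\<in>UNIV. x $ i * y $ i) = 0}"

definition self_dual :: "(4 ^ 'n) set \<Rightarrow> bool" where
  "self_dual C \<longleftrightarrow> z4_code C \<and> z4_dual C = C"

definition eucl_weight :: "4 ^ 'n \<Rightarrow> nat" where
  "eucl_weight x = card {i. x $ i = 1} + 4 * card {i. x $ i = 2} + card {i. x $ i = 3}"

definition type_II :: "(4 ^ 'n) set \<Rightarrow> bool" where
  "type_II C \<longleftrightarrow> self_dual C \<and> (\<forall>x\<in>C. 8 dvd eucl_weight x)"

definition min_eucl_weight :: "(4 ^ 'n) set \<Rightarrow> nat" where
  "min_eucl_weight C = Min {eucl_weight x | x. x \<in> C \<and> x \<noteq> 0}"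

definition extremal_type_II :: "(4 ^ 'n) set \<Rightarrow> bool" where
  "extremal_type_II C \<longleftrightarrow> type_II C \<and> min_eucl_weight C = 8 * (CARD('n) div 24) + 8"

definition red2 :: "4 \<Rightarrow> bit" where
  "red2 a = (if a = 0 \<or> a = 2 then 0 else 1)"

definition residue :: "(4 ^ 'n) set \<Rightarrow> (bit ^ 'n) set" where
  "residue C = (\<lambda>c. \<chi> i. red2 (c $ i)) ` C"

end

theory Submission imports Defs "HOL-Library.Cardinality" begin


definition idx :: "'a::finite bit0 \<Rightarrow> nat" where "idx i = nat (Rep_bit0 i)"
definition ab :: "nat \<Rightarrow> 'a::finite bit0" where "ab n = Abs_bit0 (int n)"

lemma Rep_bit0_range: "Rep_bit0 (i::'a::finite bit0) \<in> {0..<2 * int CARD('a)}"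
  using type_definition.Rep[OF type_definition_bit0] by simp

lemma idx_lt: "idx (i::'a::finite bit0) < CARD('a bit0)"
  using Rep_bit0_range[of i] by (auto simp: idx_def)

lemma idx_lt2[simp]: "idx (i::'a::finite bit0) < 2 * CARD('a)"
  using idx_lt[of i] by simp

lemma ab_idx[simp]: "ab (idx i) = (i::'a::finite bit0)"
  using Rep_bit0_range[of i] by (simp add: ab_def idx_def Rep_bit0_inverse)

lemma idx_ab[simp]: "n < CARD('a::finite bit0) \<Longrightarrow> idx (ab n :: 'a bit0) = n"
  by (simp add: ab_def idx_def Abs_bit0_inverse)

lemma idx_inj: "inj idx" by (metis ab_idx injI)

lemma idx_eq_iff[simp]: "idx i = idx j \<longleftrightarrow> i = j"
  using idx_inj by (auto dest: injD)

lemma ab_of_nat: "n < CARD('a::finite bit0) \<Longrightarrow> (ab n :: 'a bit0) = of_nat n"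
  by (simp add: ab_def bit0.of_nat_eq)

lemma bij_ab: "bij_betw (ab :: nat \<Rightarrow> 'a::finite bit0) {..<CARD('a bit0)} UNIV"
  by (rule bij_betw_byWitness[where f'=idx]) (auto simp: image_def intro: exI[of _ "idx x" for x])

lemma all_bit0: "(\<forall>i::'a::finite bit0. P i) \<longleftrightarrow> (\<forall>n<CARD('a bit0). P (ab n))"
  by (metis ab_idx idx_lt)

lemma sum_bit0: "sum f (UNIV::'a::finite bit0 set) = (\<Sum>n<CARD('a bit0). f (ab n))"
  by (rule sum.reindex_bij_betw[OF bij_ab, symmetric])

lemma card_bit0_pred: "card {i::'a::finite bit0. P (idx i)} = card {n. n < CARD('a bit0) \<and> P n}"
proof -
  have "idx ` {i::'a bit0. P (idx i)} = {n. n < CARD('a bit0) \<and> P n}"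
    apply (auto simp: image_def)
    apply (rule_tac x="ab x" in exI)
    by simp
  moreover have "inj_on idx {i::'a bit0. P (idx i)}" using idx_inj by (auto simp: inj_on_def)
  ultimately show ?thesis by (metis card_image)
qed

lemma sum_upt_list: "(\<Sum>n<N. f n) = (\<Sum>n\<leftarrow>[0..<N]. f n)"
  by (simp add: sum_set_upt_conv_sum_list_nat[symmetric] atLeast_upt lessThan_atLeast0)

lemma card_upt_filter: "card {n. n < N \<and> P n} = length (filter P [0..<N])"
proof -
  have "set (filter P [0..<N]) = {n. n < N \<and> P n}" by auto
  thus ?thesis by (metis distinct_card distinct_filter distinct_upt)
qed

lemma z4_cases: "(x::4) = 0 \<or> x = 1 \<or> x = 2 \<or> x = 3"
proof -
  have "\<forall>n<4. (of_nat n :: 4) = 0 \<or> of_nat n = (1::4) \<or> of_nat n = (2::4) \<or> of_nat n = (3::4)"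
    by (auto simp: less_Suc_eq numeral_eq_Suc)
  hence "\<forall>x::4. x = 0 \<or> x = 1 \<or> x = 2 \<or> x = 3"
    unfolding all_bit0 by (simp add: ab_of_nat)
  thus ?thesis by blast
qed

lemma card_vec8: "CARD(bit ^ 8) = 256"
proof -
  have "bij_betw vec_nth (UNIV :: (bit^8) set) (UNIV :: (8 \<Rightarrow> bit) set)"
    by (rule bij_betw_byWitness[where f'=vec_lambda]) auto
  hence "CARD(bit ^ 8) = CARD(8 \<Rightarrow> bit)" by (rule bij_betw_same_card)
  moreover have "(UNIV :: bit set) = {0, 1}" by (auto intro: bit_not_zero_iff[THEN iffD1])
  hence "CARD(bit) = 2" by (metis card_2_iff zero_neq_one)
  ultimately show ?thesis by (simp only: card_fun) simp
qed



definition gl :: "nat list list" where "gl = [[1,0,0,0,0,0,0,0,1,1,1,1,0,0,1,1,0,1,0,0,1,0,1,0,1,0,1,0,1,1,1,0,1,1,0,0,1,0,1,1], [0,1,0,0,0,0,0,0,1,1,0,1,1,0,0,0,0,1,1,0,1,1,1,1,0,0,0,0,1,0,1,0,1,0,0,1,0,0,0,1], [0,0,1,0,0,0,0,0,1,0,1,0,0,0,1,0,0,0,0,1,1,1,0,0,1,1,0,0,0,1,1,0,0,1,1,1,0,0,1,1], [0,0,0,1,0,0,0,0,1,0,0,1,1,0,0,1,1,1,1,1,1,1,0,0,0,0,1,1,1,1,1,0,0,0,0,0,1,1,1,1], [0,0,0,0,1,0,0,0,1,0,0,0,0,1,1,1,1,1,1,1,1,1,0,0,0,0,0,0,0,0,0,1,1,1,1,1,1,1,1,1],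 [0,0,0,0,0,1,0,0,1,0,0,0,0,0,0,0,0,0,0,0,0,0,1,1,1,1,1,1,1,1,1,1,1,1,1,1,1,1,1,1], [0,0,0,0,0,0,1,0,1,0,0,1,0,1,1,1,0,0,1,1,1,0,1,0,1,0,1,0,0,0,1,0,0,0,1,0,0,1,1,0], [0,0,0,0,0,0,0,1,0,1,1,1,1,1,1,1,1,1,1,1,1,1,1,1,1,1,1,1,1,1,1,1,1,1,1,1,1,1,1,1]]"
definition ul :: "nat list list" where "ul = [[0,0,1,1,1,1,1,1,1,1,0,0,0,0,0,0,0,0,0,0,0,0,0,0,0,0,0,0,0,0,0,0,0,0,0,0,0,0,0,0], [0,1,0,1,1,1,1,1,1,0,1,0,0,0,0,0,0,0,0,0,0,0,0,0,0,0,0,0,0,0,0,0,0,0,0,0,0,0,0,0], [0,0,1,0,1,1,0,1,1,0,0,1,0,0,0,0,0,0,0,0,0,0,0,0,0,0,0,0,0,0,0,0,0,0,0,0,0,0,0,0], [0,1,0,1,0,0,0,1,0,0,0,0,1,0,0,0,0,0,0,0,0,0,0,0,0,0,0,0,0,0,0,0,0,0,0,0,0,0,0,0], [0,0,0,0,1,0,1,1,0,0,0,0,0,1,0,0,0,0,0,0,0,0,0,0,0,0,0,0,0,0,0,0,0,0,0,0,0,0,0,0], [0,1,0,1,0,1,0,1,1,0,0,0,0,0,1,0,0,0,0,0,0,0,0,0,0,0,0,0,0,0,0,0,0,0,0,0,0,0,0,0], [0,1,1,0,0,1,0,1,1,0,0,0,0,0,0,1,0,0,0,0,0,0,0,0,0,0,0,0,0,0,0,0,0,0,0,0,0,0,0,0],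 [0,0,0,1,1,0,0,1,0,0,0,0,0,0,0,0,1,0,0,0,0,0,0,0,0,0,0,0,0,0,0,0,0,0,0,0,0,0,0,0], [0,0,1,0,0,1,1,1,1,0,0,0,0,0,0,0,0,1,0,0,0,0,0,0,0,0,0,0,0,0,0,0,0,0,0,0,0,0,0,0], [0,1,0,1,1,0,1,1,0,0,0,0,0,0,0,0,0,0,1,0,0,0,0,0,0,0,0,0,0,0,0,0,0,0,0,0,0,0,0,0], [0,0,1,1,1,0,1,1,0,0,0,0,0,0,0,0,0,0,0,1,0,0,0,0,0,0,0,0,0,0,0,0,0,0,0,0,0,0,0,0], [0,0,0,0,0,1,0,1,1,0,0,0,0,0,0,0,0,0,0,0,1,0,0,0,0,0,0,0,0,0,0,0,0,0,0,0,0,0,0,0], [0,1,1,1,1,0,0,1,0,0,0,0,0,0,0,0,0,0,0,0,0,1,0,0,0,0,0,0,0,0,0,0,0,0,0,0,0,0,0,0], [0,0,1,1,1,0,0,1,1,0,0,0,0,0,0,0,0,0,0,0,0,0,1,0,0,0,0,0,0,0,0,0,0,0,0,0,0,0,0,0], [0,1,0,0,0,1,0,1,0,0,0,0,0,0,0,0,0,0,0,0,0,0,0,1,0,0,0,0,0,0,0,0,0,0,0,0,0,0,0,0], [0,1,0,1,1,0,0,1,1,0,0,0,0,0,0,0,0,0,0,0,0,0,0,0,1,0,0,0,0,0,0,0,0,0,0,0,0,0,0,0], [0,0,1,0,0,1,0,1,0,0,0,0,0,0,0,0,0,0,0,0,0,0,0,0,0,1,0,0,0,0,0,0,0,0,0,0,0,0,0,0],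 [0,1,1,0,1,0,0,1,1,0,0,0,0,0,0,0,0,0,0,0,0,0,0,0,0,0,1,0,0,0,0,0,0,0,0,0,0,0,0,0], [0,0,0,1,0,1,0,1,0,0,0,0,0,0,0,0,0,0,0,0,0,0,0,0,0,0,0,1,0,0,0,0,0,0,0,0,0,0,0,0], [0,0,1,0,1,0,1,1,1,0,0,0,0,0,0,0,0,0,0,0,0,0,0,0,0,0,0,0,1,0,0,0,0,0,0,0,0,0,0,0], [0,1,0,0,1,0,1,1,1,0,0,0,0,0,0,0,0,0,0,0,0,0,0,0,0,0,0,0,0,1,0,0,0,0,0,0,0,0,0,0], [0,0,0,0,1,0,0,1,1,0,0,0,0,0,0,0,0,0,0,0,0,0,0,0,0,0,0,0,0,0,1,0,0,0,0,0,0,0,0,0], [0,0,0,0,1,1,0,1,0,0,0,0,0,0,0,0,0,0,0,0,0,0,0,0,0,0,0,0,0,0,0,1,0,0,0,0,0,0,0,0], [0,0,1,1,0,0,1,1,1,0,0,0,0,0,0,0,0,0,0,0,0,0,0,0,0,0,0,0,0,0,0,0,1,0,0,0,0,0,0,0], [0,1,0,1,0,0,1,1,1,0,0,0,0,0,0,0,0,0,0,0,0,0,0,0,0,0,0,0,0,0,0,0,0,1,0,0,0,0,0,0], [0,0,1,0,1,1,1,1,0,0,0,0,0,0,0,0,0,0,0,0,0,0,0,0,0,0,0,0,0,0,0,0,0,0,1,0,0,0,0,0], [0,1,1,0,1,1,0,1,0,0,0,0,0,0,0,0,0,0,0,0,0,0,0,0,0,0,0,0,0,0,0,0,0,0,0,1,0,0,0,0],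 [0,1,1,0,0,0,1,1,1,0,0,0,0,0,0,0,0,0,0,0,0,0,0,0,0,0,0,0,0,0,0,0,0,0,0,0,1,0,0,0], [0,0,0,1,1,1,1,1,0,0,0,0,0,0,0,0,0,0,0,0,0,0,0,0,0,0,0,0,0,0,0,0,0,0,0,0,0,1,0,0], [0,1,0,0,0,0,0,1,1,0,0,0,0,0,0,0,0,0,0,0,0,0,0,0,0,0,0,0,0,0,0,0,0,0,0,0,0,0,1,0], [0,0,0,0,0,0,1,1,1,0,0,0,0,0,0,0,0,0,0,0,0,0,0,0,0,0,0,0,0,0,0,0,0,0,0,0,0,0,0,1]]"

definition gt :: "nat \<Rightarrow> nat \<Rightarrow> bit" where "gt k n = of_bool (gl!k!n = 1)"
definition ut :: "nat \<Rightarrow> nat \<Rightarrow> bit" where "ut m n = of_bool (ul!(m-9)!n = 1)"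

lemma chk_ip: "\<forall>k\<in>set [0..<8]. \<forall>l\<in>set [0..<8]. (\<Sum>n\<leftarrow>[0..<40]. gt k n * gt l n) = 0"
  unfolding gt_def by code_simp

lemma chk_wt: "\<forall>k\<in>set [0..<8]. 4 dvd length (filter (\<lambda>n. gl!k!n = 1) [0..<40])"
  by code_simp

lemma chk_sys: "\<forall>m\<in>set [0..<8]. \<forall>n\<in>set [0..<8]. gt m n = of_bool (m = n)"
  unfolding gt_def by code_simp

lemma chk_ones: "\<forall>n\<in>set [0..<40]. (\<Sum>m\<leftarrow>[0..<8]. gt m n) = 1"
  unfolding gt_def by code_simp

lemma chk_v: "\<forall>n\<in>set [0..<40]. (\<Sum>m\<leftarrow>[0..<8]. of_bool (m \<noteq> 7) * gt m n) = of_bool (n \<in> set [0,1,2,3,4,5,6,8])"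
  unfolding gt_def by code_simp

lemma chk_cols: "\<forall>n\<in>set [0..<40]. \<forall>m\<in>set [0..<40]. (\<forall>k\<in>set [0..<8]. gt k n = gt k m) \<longrightarrow> n = m"
  unfolding gt_def by code_simp

lemma chk_U: "\<forall>m\<in>set [9..<40]. \<forall>k\<in>set [0..<8]. (\<Sum>n\<leftarrow>[0..<40]. gt k n * ut m n) = 0"
  unfolding gt_def ut_def by code_simp

lemma chk_Ud: "\<forall>m\<in>set [9..<40]. \<forall>n\<in>set [9..<40]. ut m n = of_bool (n = m)"
  unfolding ut_def by code_simp


lemma mem_upt: "a \<le> x \<Longrightarrow> x < b \<Longrightarrow> x \<in> set [a..<b]"
  by (simp only: set_upt atLeastLessThan_iff)

lemma chk_ip': assumes "k < 8" "l < 8" shows "(\<Sum>n\<leftarrow>[0..<40]. gt k n * gt l n) = 0"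
  using chk_ip mem_upt[OF _ assms(1)] mem_upt[OF _ assms(2)] by blast

lemma chk_wt': assumes "k < 8" shows "4 dvd length (filter (\<lambda>n. gl!k!n = 1) [0..<40])"
  using chk_wt mem_upt[OF _ assms(1)] by blast

lemma chk_sys': assumes "m < 8" "n < 8" shows "gt m n = of_bool (m = n)"
  using chk_sys mem_upt[OF _ assms(1)] mem_upt[OF _ assms(2)] by blast

lemma chk_ones': assumes "n < 40" shows "(\<Sum>m\<leftarrow>[0..<8]. gt m n) = 1"
  using chk_ones mem_upt[OF _ assms(1)] by blast

lemma chk_v': assumes "n < 40" shows "(\<Sum>m\<leftarrow>[0..<8]. of_bool (m \<noteq> 7) * gt m n) = of_bool (n \<in> set [0,1,2,3,4,5,6,8])"
  using chk_v mem_upt[OF _ assms(1)] by blast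

lemma chk_cols': assumes "n < 40" "m < 40" "\<forall>k<8. gt k n = gt k m" shows "n = m"
proof -
  have "\<forall>k\<in>set [0..<8]. gt k n = gt k m" using assms(3)
    by (simp only: set_upt) (auto simp: atLeastLessThan_iff)
  thus ?thesis using chk_cols mem_upt[OF _ assms(1)] mem_upt[OF _ assms(2)] by blast
qed

lemma chk_U': assumes "9 \<le> m" "m < 40" "k < 8" shows "(\<Sum>n\<leftarrow>[0..<40]. gt k n * ut m n) = 0"
  using chk_U mem_upt[OF assms(1,2)] mem_upt[OF _ assms(3)] by blast

lemma chk_Ud': assumes "9 \<le> m" "m < 40" "9 \<le> n" "n < 40" shows "ut m n = of_bool (n = m)"
  using chk_Ud mem_upt[OF assms(1,2)] mem_upt[OF assms(3,4)] by blast




declare add_bit_eq_xor[simp del] mult_bit_eq_and[simp del]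

definition gen :: "nat \<Rightarrow> bit ^ 40" where "gen k = (\<chi> i. gt k (idx i))"
definition cw :: "bit ^ 8 \<Rightarrow> bit ^ 40" where
  "cw a = (\<chi> i. \<Sum>k\<in>UNIV. a $ k * gt (idx k) (idx i))"
definition NN :: "(bit ^ 40) set" where "NN = range cw"
definition ip :: "bit ^ 'n \<Rightarrow> bit ^ 'n \<Rightarrow> bit" where "ip x y = (\<Sum>i\<in>UNIV. x $ i * y $ i)"

lemma bit_cases: "(b::bit) = 0 \<or> b = 1"
  using bit_not_zero_iff by blast

lemma cw_add: "cw (a + b) = cw a + cw b"
  by (simp add: cw_def vec_eq_iff distrib_right sum.distrib)

lemma cw_zero: "cw 0 = 0"
  by (simp add: cw_def vec_eq_iff)

lemma cw_smult: "(\<chi> i. c * cw a $ i) = cw (\<chi> k. c * a $ k)"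
  by (simp add: cw_def vec_eq_iff sum_distrib_left mult.assoc)

lemma lin_NN: "bin_linear_code NN"
  unfolding bin_linear_code_def NN_def
  by (auto simp: cw_smult) (metis cw_zero rangeI, metis cw_add rangeI)

lemma cw_sys: "n < 8 \<Longrightarrow> cw a $ (ab n :: 40) = a $ (ab n :: 8)"
proof -
  assume n: "n < 8"
  have "cw a $ (ab n :: 40) = (\<Sum>m<8. a $ (ab m :: 8) * gt m n)"
    using n by (simp add: cw_def sum_bit0)
  also have "\<dots> = (\<Sum>m<8. a $ (ab m :: 8) * of_bool (m = n))"
    using chk_sys' n by (intro sum.cong) auto
  also have "\<dots> = a $ (ab n :: 8)" using n by simp
  finally show ?thesis .
qed

lemma inj_cw: "inj cw"
proof (rule injI)
  fix a b assume "cw a = cw b"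
  hence "\<forall>n<8. a $ (ab n :: 8) = b $ (ab n)" by (metis cw_sys)
  hence "\<forall>k::8. a $ k = b $ k" unfolding all_bit0 by simp
  thus "a = b" by (simp add: vec_eq_iff)
qed

lemma card_NN: "card NN = 2 ^ 8"
  unfolding NN_def using card_image[OF inj_cw] card_vec8 by simp

lemma vec_idx_nth: "n < CARD('a::finite bit0) \<Longrightarrow> (\<chi> i::'a bit0. f (idx i)) $ ab n = f n"
  by simp


lemma ones_NN: "(\<chi> i. 1) \<in> NN"
proof -
  have "\<forall>n<40. (\<Sum>k\<in>(UNIV::8 set). gt (idx k) n) = 1"
  proof (intro allI impI)
    fix n :: nat assume n: "n < 40"
    have "(\<Sum>k\<in>(UNIV::8 set). gt (idx k) n) = (\<Sum>m<8. gt m n)"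
      by (simp add: sum_bit0)
    also have "\<dots> = (\<Sum>m\<leftarrow>[0..<8]. gt m n)" by (rule sum_upt_list)
    also have "\<dots> = 1" using chk_ones' n by simp
    finally show "(\<Sum>k\<in>(UNIV::8 set). gt (idx k) n) = 1" .
  qed
  hence "cw (\<chi> k. 1) = (\<chi> i. 1)"
    by (simp add: cw_def vec_eq_iff idx_lt[where 'a=20, simplified])
  thus ?thesis unfolding NN_def by (metis rangeI)
qed

definition vv :: "bit ^ 40" where "vv = cw (\<chi> k. of_bool (idx k \<noteq> 7))"

lemma vv_NN: "vv \<in> NN" by (simp add: vv_def NN_def)

lemma vv_nth: "vv $ i = of_bool (idx i \<in> {0,1,2,3,4,5,6,8})"
proof -
  have n: "idx i < 40" using idx_lt[of i] by simp
  have "vv $ i = (\<Sum>k\<in>(UNIV::8 set). of_bool (idx k \<noteq> 7) * gt (idx k) (idx i))"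
    by (simp add: vv_def cw_def del: sum_of_bool_mult_eq)
  also have "\<dots> = (\<Sum>m<8. of_bool (m \<noteq> 7) * gt m (idx i))"
    by (simp add: sum_bit0 del: sum_of_bool_mult_eq)
  also have "\<dots> = (\<Sum>m\<leftarrow>[0..<8]. of_bool (m \<noteq> 7) * gt m (idx i))" by (rule sum_upt_list)
  also have "\<dots> = of_bool (idx i \<in> set [0,1,2,3,4,5,6,8])"
    using chk_v' n by simp
  finally show ?thesis by simp
qed

lemma hweight_add:
  fixes x y :: "bit ^ 'n"
  shows "hweight (x + y) + 2 * card {i. x $ i \<noteq> 0 \<and> y $ i \<noteq> 0} = hweight x + hweight y"
proof -
  let ?A = "{i. x $ i \<noteq> 0}" and ?B = "{i. y $ i \<noteq> 0}"
  have e: "{i. (x + y) $ i \<noteq> 0} = (?A \<union> ?B) - (?A \<inter> ?B)"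
    using bit_cases by auto
  have s: "?A \<inter> ?B \<subseteq> ?A \<union> ?B" by blast
  have i: "{i. x $ i \<noteq> 0 \<and> y $ i \<noteq> 0} = ?A \<inter> ?B" by blast
  have "card (?A \<union> ?B) + card (?A \<inter> ?B) = card ?A + card ?B"
    using card_Un_Int[of ?A ?B] by simp
  moreover have "card ((?A \<union> ?B) - (?A \<inter> ?B)) = card (?A \<union> ?B) - card (?A \<inter> ?B)"
    by (rule card_Diff_subset) (auto simp: s)
  moreover have "card (?A \<inter> ?B) \<le> card (?A \<union> ?B)" by (rule card_mono) auto
  ultimately show ?thesis unfolding hweight_def e i by linarith
qed

lemma ip_card: "ip x y = of_nat (card {i. x $ i \<noteq> 0 \<and> y $ i \<noteq> 0})"
proof -
  have "\<And>i. x $ i * y $ i = of_bool (x $ i \<noteq> 0 \<and> y $ i \<noteq> 0)"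
    subgoal for i using bit_cases[of "x $ i"] bit_cases[of "y $ i"] by auto
    done
  hence "ip x y = (\<Sum>i\<in>UNIV. of_bool (x $ i \<noteq> 0 \<and> y $ i \<noteq> 0))" by (simp add: ip_def)
  thus ?thesis by simp
qed

lemma ip_sum_right: "ip x (sum g S) = (\<Sum>l\<in>S. ip x (g l))"
  by (simp add: ip_def sum_distrib_left sum.swap[of _ UNIV S])

lemma bit_of_nat_eq0: "(of_nat n :: bit) = 0 \<longleftrightarrow> even n"
  by (metis bit_not_zero_iff even_of_nat_iff odd_one even_zero)

lemma de_sum:
  fixes g :: "'k \<Rightarrow> bit ^ 'n"
  assumes "finite S" "\<forall>k\<in>S. 4 dvd hweight (g k)" "\<forall>k\<in>S. \<forall>l\<in>S. ip (g k) (g l) = 0"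
  shows "4 dvd hweight (sum g S)"
  using assms
proof (induction S rule: finite_induct)
  case empty
  then show ?case by (simp add: hweight_def)
next
  case (insert j S)
  let ?s = "sum g S"
  have IH: "4 dvd hweight ?s" using insert by auto
  have "ip (g j) ?s = 0" using insert.prems insert.hyps by (simp add: ip_sum_right)
  hence "even (card {i. g j $ i \<noteq> 0 \<and> ?s $ i \<noteq> 0})" by (simp add: ip_card bit_of_nat_eq0)
  then obtain d where d: "card {i. g j $ i \<noteq> 0 \<and> ?s $ i \<noteq> 0} = 2 * d" by blast
  have "hweight (g j + ?s) + 4 * d = hweight (g j) + hweight ?s"
    using hweight_add[of "g j" ?s] d by simp
  moreover have "4 dvd hweight (g j)" using insert by auto
  ultimately have "4 dvd hweight (g j + ?s)" using IH
    by (metis dvd_add dvd_add_left_iff dvd_triv_left)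
  thus ?case using insert.hyps by simp
qed

lemma hweight_vec: "hweight (\<chi> i::40. f (idx i)) = card {n. n < 40 \<and> f n \<noteq> 0}"
  unfolding hweight_def using card_bit0_pred[where P="\<lambda>n. f n \<noteq> 0" and 'a="20"] by simp

lemma gen_wt: "k < 8 \<Longrightarrow> 4 dvd hweight (gen k)"
proof -
  assume k: "k < 8"
  have "hweight (gen k) = card {n. n < 40 \<and> gt k n \<noteq> 0}" by (simp add: gen_def hweight_vec)
  also have "\<dots> = length (filter (\<lambda>n. gl!k!n = 1) [0..<40])"
    by (simp add: card_upt_filter gt_def)
  finally show ?thesis using chk_wt' k by simp
qed

lemma gen_ip: "k < 8 \<Longrightarrow> l < 8 \<Longrightarrow> ip (gen k) (gen l) = 0"
proof -
  assume k: "k < 8" and l: "l < 8"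
  have "ip (gen k) (gen l) = (\<Sum>i\<in>(UNIV::40 set). gt k (idx i) * gt l (idx i))"
    by (simp add: ip_def gen_def)
  also have "\<dots> = (\<Sum>n<40. gt k n * gt l n)" by (simp add: sum_bit0)
  also have "\<dots> = (\<Sum>n\<leftarrow>[0..<40]. gt k n * gt l n)" by (rule sum_upt_list)
  also have "\<dots> = 0" using chk_ip' k l by simp
  finally show ?thesis .
qed

lemma cw_as_sum: "cw a = sum (\<lambda>k. gen (idx k)) {k. a $ k \<noteq> 0}"
proof -
  have "\<And>i::40. (\<Sum>k\<in>UNIV. a $ k * gt (idx k) (idx i)) = (\<Sum>k\<in>{k. a $ k \<noteq> 0}. gt (idx k) (idx i))"
  proof -
    fix i :: 40
    have "\<And>k. a $ k * gt (idx k) (idx i) = (if a $ k \<noteq> 0 then gt (idx k) (idx i) else 0)"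
      using bit_cases by auto
    hence "(\<Sum>k\<in>UNIV. a $ k * gt (idx k) (idx i)) = (\<Sum>k\<in>UNIV. if a $ k \<noteq> 0 then gt (idx k) (idx i) else 0)"
      by simp
    also have "\<dots> = (\<Sum>k\<in>{k. a $ k \<noteq> 0}. gt (idx k) (idx i))"
      by (simp add: sum.If_cases)
    finally show "(\<Sum>k\<in>UNIV. a $ k * gt (idx k) (idx i)) = (\<Sum>k\<in>{k. a $ k \<noteq> 0}. gt (idx k) (idx i))" .
  qed
  thus ?thesis by (simp add: cw_def gen_def vec_eq_iff)
qed

lemma de_NN: "doubly_even NN"
  unfolding doubly_even_def NN_def
proof safe
  fix a
  show "4 dvd hweight (cw a)" unfolding cw_as_sum
    by (rule de_sum) (auto simp: gen_wt gen_ip idx_lt[where 'a=4, simplified])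
qed




lemma idx40[simp]: "idx (i::40) < 40" using idx_lt[of i] by simp

lemma ip_sum_left: "ip (sum g S) y = (\<Sum>l\<in>S. ip (g l) y)"
  by (simp add: ip_def sum_distrib_right sum.swap[of _ UNIV S])

lemma dual_gen:
  assumes h: "\<forall>k<8. ip (gen k) y = 0"
  shows "y \<in> bin_dual NN"
proof -
  have "\<And>a. ip (cw a) y = 0"
  proof -
    fix a :: "bit ^ 8"
    have "ip (cw a) y = (\<Sum>k\<in>{k. a $ k \<noteq> 0}. ip (gen (idx k)) y)"
      unfolding cw_as_sum by (rule ip_sum_left)
    also have "\<dots> = 0" using h idx_lt[where 'a=4] by (intro sum.neutral) auto
    finally show "ip (cw a) y = 0" .
  qed
  thus ?thesis by (auto simp: bin_dual_def NN_def ip_def)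
qed

lemma gen_NN: "k < 8 \<Longrightarrow> gen k \<in> NN"
proof -
  assume k: "k < 8"
  have e: "{m::8. (if idx m = k then 1 else 0) \<noteq> (0::bit)} = {ab k}"
    using k by auto
  have "cw (\<chi> m. if idx m = k then 1 else 0) = sum (\<lambda>m. gen (idx m)) {ab k :: 8}"
    unfolding cw_as_sum by (simp only: vec_lambda_beta e)
  also have "\<dots> = gen k" using k by simp
  finally have "cw (\<chi> m. if idx m = k then 1 else 0) = gen k" .
  thus ?thesis unfolding NN_def by (metis rangeI)
qed

lemma bit_add_eq0: "(a::bit) + b = 0 \<longleftrightarrow> a = b"
  using bit_cases[of a] bit_cases[of b] by auto

lemma dual_mw: "min_weight_ge (bin_dual NN) 4"
  unfolding min_weight_ge_def
proof (intro ballI impI)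
  fix y assume yD: "y \<in> bin_dual NN" and y0: "y \<noteq> 0"
  have orth: "\<And>x. x \<in> NN \<Longrightarrow> ip x y = 0" using yD by (simp add: bin_dual_def ip_def)
  define S where "S = {i. y $ i \<noteq> 0}"
  have yi: "\<And>i. y $ i = of_bool (i \<in> S)" unfolding S_def using bit_cases by auto
  have ipS: "\<And>x. ip x y = (\<Sum>i\<in>S. x $ i)"
  proof -
    fix x :: "bit ^ 40"
    have "ip x y = (\<Sum>i\<in>UNIV. x $ i * of_bool (i \<in> S))" unfolding ip_def using yi by simp
    also have "\<dots> = (\<Sum>i\<in>S. x $ i)" by (simp add: sum_mult_of_bool_eq)
    finally show "ip x y = (\<Sum>i\<in>S. x $ i)" .
  qed
  have "ip (\<chi> i. 1) y = 0" using orth ones_NN by blast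
  hence "(of_nat (card S) :: bit) = 0" using ipS[of "\<chi> i. 1"] by simp
  hence ev: "even (card S)" by (simp add: bit_of_nat_eq0)
  have "S \<noteq> {}" using y0 unfolding S_def by (auto simp: vec_eq_iff)
  hence c0: "card S \<noteq> 0" by simp
  show "4 \<le> hweight y"
  proof (rule ccontr)
    assume "\<not> 4 \<le> hweight y"
    hence "card S < 4" by (simp add: hweight_def S_def)
    hence "card S = 2" using ev c0 by presburger
    then obtain p q where pq: "S = {p, q}" "p \<noteq> q" by (auto simp: card_2_iff)
    have "\<forall>k<8. gt k (idx p) = gt k (idx q)"
    proof (intro allI impI)
      fix k :: nat assume k: "k < 8"
      have "ip (gen k) y = 0" using orth gen_NN k by blast
      hence "gen k $ p + gen k $ q = 0" using ipS[of "gen k"] pq by simp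
      thus "gt k (idx p) = gt k (idx q)" by (simp add: gen_def bit_add_eq0)
    qed
    hence "idx p = idx q" using chk_cols'[of "idx p" "idx q"] idx_lt[of p] idx_lt[of q] by simp
    thus False using pq by simp
  qed
qed

definition UU :: "nat \<Rightarrow> bit ^ 40" where "UU m = (\<chi> i. ut m (idx i))"

lemma UU_dual: assumes m: "9 \<le> m" "m < 40" shows "UU m \<in> bin_dual NN"
proof (rule dual_gen, intro allI impI)
  fix k :: nat assume k: "k < 8"
  have "ip (gen k) (UU m) = (\<Sum>i\<in>(UNIV::40 set). gt k (idx i) * ut m (idx i))"
    by (simp add: ip_def gen_def UU_def)
  also have "\<dots> = (\<Sum>n<40. gt k n * ut m n)" by (simp add: sum_bit0)
  also have "\<dots> = (\<Sum>n\<leftarrow>[0..<40]. gt k n * ut m n)" by (rule sum_upt_list)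
  also have "\<dots> = 0" using chk_U' k m by simp
  finally show "ip (gen k) (UU m) = 0" .
qed

lemma UU_nth: "9 \<le> m \<Longrightarrow> m < 40 \<Longrightarrow> 9 \<le> idx i \<Longrightarrow> UU m $ (i::40) = of_bool (idx i = m)"
  using chk_Ud'[of m "idx i"] idx_lt[of i] by (simp add: UU_def)

lemma dual_sum: "finite S \<Longrightarrow> (\<forall>j\<in>S. g j \<in> bin_dual N) \<Longrightarrow> sum g S \<in> bin_dual N"
proof (induction S rule: finite_induct)
  case empty
  then show ?case by (simp add: bin_dual_def)
next
  case (insert j S)
  hence a: "g j \<in> bin_dual N" and b: "sum g S \<in> bin_dual N" by auto
  have "\<forall>x\<in>N. (\<Sum>i\<in>UNIV. x $ i * (g j + sum g S) $ i) = 0"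
  proof
    fix x assume "x \<in> N"
    hence "(\<Sum>i\<in>UNIV. x $ i * g j $ i) = 0" "(\<Sum>i\<in>UNIV. x $ i * sum g S $ i) = 0"
      using a b unfolding bin_dual_def by blast+
    thus "(\<Sum>i\<in>UNIV. x $ i * (g j + sum g S) $ i) = 0"
      by (simp only: vector_add_component distrib_left sum.distrib) simp
  qed
  thus ?case using insert.hyps by (simp add: bin_dual_def)
qed

definition lift2 :: "bit ^ 'n \<Rightarrow> 4 ^ 'n" where "lift2 u = (\<chi> i. if u $ i = 1 then 2 else 0)"

lemma mult_lift: "x * (if b = (1::bit) then 2 else (0::4)) = (if red2 x * b = 1 then 2 else 0)"
  using z4_cases[of x] bit_cases[of b] by (auto simp: red2_def)

lemma sum_lift: "finite A \<Longrightarrow>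
  (\<Sum>i\<in>A. (if f i = (1::bit) then 2 else (0::4))) = (if sum f A = 1 then 2 else 0)"
proof (induction A rule: finite_induct)
  case empty
  then show ?case by simp
next
  case (insert j A)
  then show ?case using bit_cases[of "f j"] bit_cases[of "sum f A"] by auto
qed

lemma lift_dual:
  assumes redN: "\<forall>x\<in>C. (\<chi> i. red2 (x $ i)) \<in> N" and uD: "u \<in> bin_dual N"
  shows "lift2 u \<in> z4_dual C"
  unfolding z4_dual_def
proof (intro CollectI ballI)
  fix x assume xC: "x \<in> C"
  have "(\<Sum>i\<in>UNIV. (\<chi> i. red2 (x $ i)) $ i * u $ i) = 0"
    using redN xC uD unfolding bin_dual_def by blast
  hence s: "(\<Sum>i\<in>UNIV. red2 (x $ i) * u $ i) = 0" by simp
  have "(\<Sum>i\<in>UNIV. x $ i * lift2 u $ i) = (\<Sum>i\<in>UNIV. (if red2 (x $ i) * u $ i = 1 then 2 else (0::4)))"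
    by (simp add: lift2_def mult_lift)
  also have "\<dots> = 0" by (simp add: sum_lift s)
  finally show "(\<Sum>i\<in>UNIV. x $ i * lift2 u $ i) = 0" .
qed

lemma not_ext:
  fixes C :: "(4 ^ 40) set"
  assumes tC: "type_II C" and rC: "residue C = NN"
  shows "\<not> extremal_type_II C"
proof -
  have zc: "z4_code C" and sd: "z4_dual C = C" using tC by (auto simp: type_II_def self_dual_def)
  have redN: "\<forall>x\<in>C. (\<chi> i. red2 (x $ i)) \<in> NN" using rC unfolding residue_def by blast
  have "vv \<in> (\<lambda>c. \<chi> i. red2 (c $ i)) ` C" using vv_NN rC unfolding residue_def by simp
  then obtain c where cC: "c \<in> C" and cv: "vv = (\<chi> i. red2 (c $ i))" by (rule imageE)
  have cvi: "\<And>i. red2 (c $ i) = vv $ i" unfolding cv by simp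
  define J where "J = {j::40. 9 \<le> idx j \<and> c $ j = 2}"
  define u where "u = (\<Sum>j\<in>J. UU (idx j))"
  have uD: "u \<in> bin_dual NN" unfolding u_def
    by (rule dual_sum) (auto simp: J_def intro!: UU_dual)
  have ui: "\<And>i. 9 \<le> idx i \<Longrightarrow> u $ i = (if i \<in> J then 1 else 0)"
  proof -
    fix i :: 40 assume i: "9 \<le> idx i"
    have "u $ i = (\<Sum>j\<in>J. UU (idx j) $ i)" by (simp add: u_def)
    also have "\<dots> = (\<Sum>j\<in>J. if i = j then 1 else 0)"
      by (rule sum.cong) (auto simp: J_def UU_nth i)
    also have "\<dots> = (if i \<in> J then 1 else 0)" by (simp add: sum.delta)
    finally show "u $ i = (if i \<in> J then 1 else 0)" .
  qed
  define z where "z = c + lift2 u"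
  have lC: "lift2 u \<in> C" using lift_dual[OF redN uD] sd by simp
  have zC: "z \<in> C" using zc cC lC by (simp add: z_def z4_code_def)
  have zi: "\<And>i. z $ i = c $ i + (if u $ i = 1 then 2 else 0)" by (simp add: z_def lift2_def)
  have zS: "\<And>i. idx i \<in> {0,1,2,3,4,5,6,8} \<Longrightarrow> z $ i = 1 \<or> z $ i = 3"
  proof -
    fix i :: 40 assume "idx i \<in> {0,1,2,3,4,5,6,8}"
    hence "red2 (c $ i) = 1" using cvi vv_nth by simp
    hence "c $ i = 1 \<or> c $ i = 3" using z4_cases[of "c $ i"] by (auto simp: red2_def)
    thus "z $ i = 1 \<or> z $ i = 3" using zi[of i] bit_cases[of "u $ i"] by auto
  qed
  have zT: "\<And>i. 9 \<le> idx i \<Longrightarrow> z $ i = 0"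
  proof -
    fix i :: 40 assume i: "9 \<le> idx i"
    hence "red2 (c $ i) = 0" using cvi vv_nth by simp
    hence "c $ i = 0 \<or> c $ i = 2" using z4_cases[of "c $ i"] by (auto simp: red2_def)
    thus "z $ i = 0" using zi[of i] ui[OF i] i by (auto simp: J_def)
  qed
  have z7: "\<And>i. idx i = 7 \<Longrightarrow> z $ i = 0 \<or> z $ i = 2"
  proof -
    fix i :: 40 assume i: "idx i = 7"
    hence "red2 (c $ i) = 0" using cvi vv_nth by simp
    hence "c $ i = 0 \<or> c $ i = 2" using z4_cases[of "c $ i"] by (auto simp: red2_def)
    thus "z $ i = 0 \<or> z $ i = 2" using zi[of i] bit_cases[of "u $ i"] by auto
  qed
  have cover: "\<And>i::40. idx i \<in> {0,1,2,3,4,5,6,8} \<or> idx i = 7 \<or> 9 \<le> idx i" by auto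
  have A: "{i. z $ i = 1} \<union> {i. z $ i = 3} \<subseteq> {i::40. idx i \<in> {0,1,2,3,4,5,6,8}}"
  proof
    fix i assume "i \<in> {i. z $ i = 1} \<union> {i. z $ i = 3}"
    hence "z $ i = 1 \<or> z $ i = 3" by simp
    thus "i \<in> {i::40. idx i \<in> {0,1,2,3,4,5,6,8}}" using cover[of i] zT[of i] z7[of i] by auto
  qed
  have B: "{i. z $ i = 2} \<subseteq> {i::40. idx i = 7}"
  proof
    fix i assume "i \<in> {i. z $ i = 2}"
    hence "z $ i = 2" by simp
    thus "i \<in> {i::40. idx i = 7}" using cover[of i] zT[of i] zS[of i] by auto
  qed
  define S8 where "S8 = {0,1,2,3,4,5,6,8::nat}"
  have "card {i::40. idx i \<in> S8} = card {n. n < 40 \<and> n \<in> S8}"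
    using card_bit0_pred[where P="\<lambda>n. n \<in> S8" and 'a=20] by simp
  also have "{n. n < 40 \<and> n \<in> S8} = S8" by (auto simp: S8_def)
  also have "card S8 = 8" by (simp add: S8_def)
  finally have cA: "card {i::40. idx i \<in> {0,1,2,3,4,5,6,8}} = 8" unfolding S8_def .
  have sB: "{n. n < 40 \<and> n = (7::nat)} = {7}" by auto
  have cB: "card {i::40. idx i = 7} = 1"
    using card_bit0_pred[where P="\<lambda>n. n = 7" and 'a=20] by (simp add: sB)
  have "card {i. z $ i = 1} + card {i. z $ i = 3} = card ({i. z $ i = 1} \<union> {i. z $ i = 3})"
    by (rule card_Un_disjoint[symmetric]) auto
  also have "\<dots> \<le> 8" using card_mono[OF _ A] cA by simp
  finally have w13: "card {i. z $ i = 1} + card {i. z $ i = 3} \<le> 8" .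
  have w2: "card {i. z $ i = 2} \<le> 1" using card_mono[OF _ B] cB by simp
  have wz: "eucl_weight z \<le> 12" unfolding eucl_weight_def using w13 w2 by linarith
  have "z $ (ab 0) = 1 \<or> z $ (ab 0) = 3" by (rule zS) simp
  hence nz: "z \<noteq> 0" by auto
  have fin: "finite {eucl_weight x | x. x \<in> C \<and> x \<noteq> 0}" by simp
  have "min_eucl_weight C \<le> eucl_weight z"
    unfolding min_eucl_weight_def by (rule Min_le[OF fin]) (use zC nz in blast)
  hence "min_eucl_weight C \<le> 12" using wz by linarith
  thus ?thesis by (simp add: extremal_type_II_def)
qed

theorem mainTheorem13:
  "\<exists>N :: (bit ^ 40) set.
     bin_code_nk N 8 \<and> doubly_even N \<and> (\<chi> i. 1) \<in> N \<and> min_weight_ge (bin_dual N) 4 \<and>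
     (\<forall>C :: (4 ^ 40) set. type_II C \<and> residue C = N \<longrightarrow> \<not> extremal_type_II C)"
  apply (rule exI[of _ NN])
  using lin_NN card_NN de_NN ones_NN dual_mw not_ext by (simp add: bin_code_nk_def)


end
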